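(* Let $U$ be a nonempty finite set, $R\subseteq U\times U$ serial and transitive, and $r$ the rank function of the matroid $M(Reg(U,R))$. Then $r(X)=h(X)$ for every $X\in Reg(U,R)$.
   Context: $R_s(x)=\{y\in U\mid xRy\}$; $\underline{R}(X)=\{x\mid R_s(x)\subseteq X\}$, $\overline{R}(X)=\{x\mid R_s(x)\cap X\neq\emptyset\}$; $X$ is regular if $X=\underline{R}(\overline{R}(X))$, and $Reg(U,R)$ is the lattice of regular sets under inclusion, with least element $\emptyset$. $h(A)$ is the length of a maximal chain in $[\emptyset,A]$. $M(Reg(U,R))$ is the matroid on $U$ with independent sets $\mathbf{I}(Reg(U,R);h)=\{X\subseteq U\mid h(Y)\ge|X\cap Y|\ \forall Y\in Reg(U,R)\}$; its rank function is $r(X)=\max\{|I|\mid I\subseteq X,\ I\in\mathbf{I}\}$. *)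

theory Defs
  imports Main
begin

definition successors :: "('a \<times> 'a) set \<Rightarrow> 'a \<Rightarrow> 'a set" where
  "successors R x = {y. (x, y) \<in> R}"

definition lower_approx :: "'a set \<Rightarrow> ('a \<times> 'a) set \<Rightarrow> 'a set \<Rightarrow> 'a set" where
  "lower_approx U R X = {x \<in> U. successors R x \<subseteq> X}"

definition upper_approx :: "'a set \<Rightarrow> ('a \<times> 'a) set \<Rightarrow> 'a set \<Rightarrow> 'a set" where
  "upper_approx U R X = {x \<in> U. successors R x \<inter> X \<noteq> {}}"

definition Reg :: "'a set \<Rightarrow> ('a \<times> 'a) set \<Rightarrow> 'a set set" where
  "Reg U R = {X. X \<subseteq> U \<and> X = lower_approx U R (upper_approx U R X)}"

definition serial_on :: "'a set \<Rightarrow> ('a \<times> 'a) set \<Rightarrow> bool" where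
  "serial_on U R \<longleftrightarrow> (\<forall>x\<in>U. \<exists>y\<in>U. (x, y) \<in> R)"

definition is_chain :: "'a set set \<Rightarrow> bool" where
  "is_chain C \<longleftrightarrow> (\<forall>A\<in>C. \<forall>B\<in>C. A \<subseteq> B \<or> B \<subseteq> A)"

definition reg_height :: "'a set \<Rightarrow> ('a \<times> 'a) set \<Rightarrow> 'a set \<Rightarrow> nat" where
  "reg_height U R A = Max {card C - 1 | C. C \<subseteq> {Y \<in> Reg U R. Y \<subseteq> A} \<and> is_chain C \<and> C \<noteq> {}}"

definition reg_indep :: "'a set \<Rightarrow> ('a \<times> 'a) set \<Rightarrow> 'a set \<Rightarrow> bool" where
  "reg_indep U R X \<longleftrightarrow> X \<subseteq> U \<and> (\<forall>Y\<in>Reg U R. card (X \<inter> Y) \<le> reg_height U R Y)"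

definition reg_rank :: "'a set \<Rightarrow> ('a \<times> 'a) set \<Rightarrow> 'a set \<Rightarrow> nat" where
  "reg_rank U R X = Max {card I | I. I \<subseteq> X \<and> reg_indep U R I}"

end

theory Submission
  imports Defs
begin

lemma chain_card_le:
  assumes "finite A" "C \<subseteq> Pow A" "is_chain C"
  shows "card C \<le> card A + 1"
proof -
  have inj: "inj_on card C"
  proof (rule inj_onI)
    fix B1 B2 assume b: "B1 \<in> C" "B2 \<in> C" "card B1 = card B2"
    have f: "finite B1" "finite B2"
      using b(1,2) assms(2) finite_subset[OF _ assms(1)] by auto
    from assms(3) b have "B1 \<subseteq> B2 \<or> B2 \<subseteq> B1" unfolding is_chain_def by blast
    then show "B1 = B2"
    proof
      assume "B1 \<subseteq> B2" then show ?thesis using card_subset_eq[OF f(2)] b(3) by simp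
    next
      assume "B2 \<subseteq> B1" then show ?thesis using card_subset_eq[OF f(1), of B2] b(3) by auto
    qed
  qed
  have sub: "card ` C \<subseteq> {0..card A}"
  proof
    fix n assume "n \<in> card ` C"
    then obtain B where "B \<in> C" "n = card B" by blast
    then have "B \<subseteq> A" using assms(2) by blast
    then show "n \<in> {0..card A}" using card_mono[OF assms(1)] \<open>n = card B\<close> by simp
  qed
  have "card (card ` C) \<le> card {0..card A}"
    by (rule card_mono[OF finite_atLeastAtMost sub])
  then show ?thesis using card_image[OF inj] by simp
qed

lemma chain_image:
  assumes "is_chain C" and m: "\<And>A B. A \<subseteq> B \<Longrightarrow> f A \<subseteq> f B"
  shows "is_chain (f ` C)"
  unfolding is_chain_def
proof (intro ballI)
  fix A' B' assume "A' \<in> f ` C" "B' \<in> f ` C"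
  then obtain A B where ab: "A \<in> C" "B \<in> C" "A' = f A" "B' = f B" by blast
  have "A \<subseteq> B \<or> B \<subseteq> A" using assms(1) ab(1,2) unfolding is_chain_def by blast
  then show "A' \<subseteq> B' \<or> B' \<subseteq> A'" using m ab(3,4) by blast
qed

lemma chain_exists:
  assumes "finite A"
  shows "\<exists>C. C \<subseteq> Pow A \<and> is_chain C \<and> card C = card A + 1"
  using assms
proof (induction A rule: finite_induct)
  case empty
  show ?case by (rule exI[of _ "{{}}"]) (simp add: is_chain_def)
next
  case (insert a F)
  then obtain C where C: "C \<subseteq> Pow F" "is_chain C" "card C = card F + 1" by blast
  have fC: "finite C" using C(1) insert(1) by (meson finite_Pow_iff finite_subset)
  have nin: "insert a F \<notin> C" using C(1) insert(2) by blast
  have "insert (insert a F) C \<subseteq> Pow (insert a F)" using C(1) by blast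
  moreover have "is_chain (insert (insert a F) C)"
    using C(1,2) unfolding is_chain_def by blast
  moreover have "card (insert (insert a F) C) = card (insert a F) + 1"
    using fC nin C(3) insert(1,2) by simp
  ultimately show ?case by blast
qed

locale rs =
  fixes U :: "'a set" and R :: "('a \<times> 'a) set"
  assumes fin: "finite U" and sub: "R \<subseteq> U \<times> U" and ser: "serial_on U R" and tr: "trans R"
begin

definition termi :: "'a \<Rightarrow> bool" where
  "termi t \<longleftrightarrow> t \<in> U \<and> (\<forall>z. (t,z) \<in> R \<longrightarrow> (z,t) \<in> R)"
definition rep where "rep t = (SOME s. (t,s) \<in> R)"
definition Rp where "Rp = rep ` {t. termi t}"
definition Phi where "Phi A = {x \<in> U. \<forall>t\<in>Rp. (x,t) \<in> R \<longrightarrow> t \<in> A}"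

lemma tr': "(a,b)\<in>R \<Longrightarrow> (b,c)\<in>R \<Longrightarrow> (a,c)\<in>R" using tr by (meson transD)
lemma ser': "x \<in> U \<Longrightarrow> \<exists>y. (x,y)\<in>R" using ser unfolding serial_on_def by blast
lemma inU: "(a,b)\<in>R \<Longrightarrow> a\<in>U \<and> b\<in>U" using sub by blast

lemma termi_refl: "termi t \<Longrightarrow> (t,t)\<in>R"
  using ser' tr' unfolding termi_def by blast

lemma termi_step: "termi t \<Longrightarrow> (t,z)\<in>R \<Longrightarrow> termi z \<and> (z,t)\<in>R"
  unfolding termi_def using tr' inU by blast

lemma exists_termi:
  assumes x: "x \<in> U" shows "\<exists>w. termi w \<and> (x,w)\<in>R"
proof -
  define f where "f y = card {u. (y,u)\<in>R}" for y
  obtain y0 where "(x,y0) \<in> R" using ser' x by blast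
  then obtain t where t: "(x,t)\<in>R" and tmin: "\<And>y. (x,y)\<in>R \<Longrightarrow> f t \<le> f y"
    using ex_has_least_nat[of "\<lambda>y. (x,y)\<in>R" y0 f] by metis
  have finS: "\<And>y. finite {u. (y,u)\<in>R}"
    by (rule finite_subset[OF _ fin]) (auto dest: inU)
  have eqS: "\<And>y. (t,y)\<in>R \<Longrightarrow> {u. (y,u)\<in>R} = {u. (t,u)\<in>R}"
  proof -
    fix y assume ty: "(t,y)\<in>R"
    have s: "{u. (y,u)\<in>R} \<subseteq> {u. (t,u)\<in>R}" using tr'[OF ty] by blast
    have "f t \<le> f y" by (rule tmin[OF tr'[OF t ty]])
    then have "card {u. (y,u)\<in>R} = card {u. (t,u)\<in>R}"
      using card_mono[OF finS s] unfolding f_def by linarith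
    then show "{u. (y,u)\<in>R} = {u. (t,u)\<in>R}"
      by (rule card_subset_eq[OF finS s])
  qed
  obtain w where tw: "(t,w)\<in>R" using ser'[of t] inU[OF t] by blast
  have "termi w"
    unfolding termi_def
  proof (intro conjI allI impI)
    show "w \<in> U" using inU[OF tw] by blast
    fix z assume wz: "(w,z)\<in>R"
    have tz: "(t,z)\<in>R" using tr'[OF tw wz] .
    have "w \<in> {u. (t,u)\<in>R}" using tw by simp
    then show "(z,w)\<in>R" using eqS[OF tz] by (metis mem_Collect_eq)
  qed
  then show ?thesis using tr'[OF t tw] by blast
qed

lemma rep_props: "termi t \<Longrightarrow> (t, rep t) \<in> R"
  unfolding rep_def using ser' termi_def by (metis someI)

lemma rep_eq: "termi t \<Longrightarrow> (t,s)\<in>R \<Longrightarrow> rep s = rep t"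
proof -
  assume a: "termi t" "(t,s)\<in>R"
  have "(\<lambda>u. (s,u)\<in>R) = (\<lambda>u. (t,u)\<in>R)"
    using termi_step[OF a] a(2) tr' by (auto intro!: ext)
  then show ?thesis unfolding rep_def by simp
qed

lemma Rp_fix: "r \<in> Rp \<Longrightarrow> rep r = r \<and> termi r"
proof -
  assume "r \<in> Rp"
  then obtain t where t: "termi t" "r = rep t" unfolding Rp_def by blast
  then have "(t,r)\<in>R" using rep_props by blast
  then show ?thesis using rep_eq t termi_step by blast
qed

lemma rep_in: "termi t \<Longrightarrow> rep t \<in> Rp" unfolding Rp_def by blast

lemma Rp_iff: "termi t \<Longrightarrow> r \<in> Rp \<Longrightarrow> (t,r)\<in>R \<longleftrightarrow> r = rep t"
  using rep_eq Rp_fix rep_props by metis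

lemma reg_char: "Y \<in> Reg U R \<longleftrightarrow> Y \<subseteq> U \<and> Y = {x\<in>U. \<forall>y. (x,y)\<in>R \<longrightarrow> (\<exists>z\<in>Y. (y,z)\<in>R)}"
proof -
  have "lower_approx U R (upper_approx U R Y) = {x\<in>U. \<forall>y. (x,y)\<in>R \<longrightarrow> (\<exists>z\<in>Y. (y,z)\<in>R)}"
    unfolding lower_approx_def upper_approx_def successors_def using inU by blast
  then show ?thesis unfolding Reg_def by simp
qed

lemma K1: assumes Y: "Y \<in> Reg U R" shows "Y = Phi (Y \<inter> Rp)"
proof -
  have h: "Y \<subseteq> U \<and> Y = {x\<in>U. \<forall>y. (x,y)\<in>R \<longrightarrow> (\<exists>z\<in>Y. (y,z)\<in>R)}" using Y reg_char by blast
  have mem: "\<And>x. x \<in> Y \<longleftrightarrow> x \<in> U \<and> (\<forall>y. (x,y)\<in>R \<longrightarrow> (\<exists>z\<in>Y. (y,z)\<in>R))"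
  proof -
    fix x
    have "x \<in> Y \<longleftrightarrow> x \<in> {x\<in>U. \<forall>y. (x,y)\<in>R \<longrightarrow> (\<exists>z\<in>Y. (y,z)\<in>R)}"
      using h by (metis (no_types, lifting))
    then show "x \<in> Y \<longleftrightarrow> x \<in> U \<and> (\<forall>y. (x,y)\<in>R \<longrightarrow> (\<exists>z\<in>Y. (y,z)\<in>R))" by simp
  qed
  have inv: "\<And>z t. z \<in> Y \<Longrightarrow> termi z \<Longrightarrow> (z,t)\<in>R \<Longrightarrow> t \<in> Y"
  proof -
    fix z t assume a: "z \<in> Y" "termi z" "(z,t)\<in>R"
    have tt: "termi t" using termi_step a by blast
    have "\<forall>y. (t,y)\<in>R \<longrightarrow> (\<exists>z'\<in>Y. (y,z')\<in>R)"
    proof (intro allI impI)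
      fix y assume ty: "(t,y)\<in>R"
      have "(y,t)\<in>R" using termi_step[OF tt ty] by blast
      moreover have "(t,z)\<in>R" using termi_step a by blast
      ultimately show "\<exists>z'\<in>Y. (y,z')\<in>R" using a(1) tr' by blast
    qed
    then show "t \<in> Y" using mem inU a(3) by blast
  qed
  show ?thesis
  proof
    show "Y \<subseteq> Phi (Y \<inter> Rp)"
    proof
      fix x assume x: "x \<in> Y"
      have "\<forall>t\<in>Rp. (x,t) \<in> R \<longrightarrow> t \<in> Y \<inter> Rp"
      proof (intro ballI impI)
        fix t assume t: "t \<in> Rp" "(x,t)\<in>R"
        then obtain z where z: "z \<in> Y" "(t,z)\<in>R" using mem x by blast
        have tt: "termi t" using Rp_fix t by blast
        have "termi z" "(z,t)\<in>R" using termi_step[OF tt z(2)] by auto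
        then show "t \<in> Y \<inter> Rp" using inv z t by blast
      qed
      then show "x \<in> Phi (Y \<inter> Rp)" unfolding Phi_def using x h by blast
    qed
  next
    show "Phi (Y \<inter> Rp) \<subseteq> Y"
    proof
      fix x assume x: "x \<in> Phi (Y \<inter> Rp)"
      have "\<forall>y. (x,y)\<in>R \<longrightarrow> (\<exists>z\<in>Y. (y,z)\<in>R)"
      proof (intro allI impI)
        fix y assume xy: "(x,y)\<in>R"
        obtain w where w: "termi w" "(y,w)\<in>R" using exists_termi inU xy by blast
        have yr: "(y, rep w)\<in>R" using tr' w rep_props by blast
        have "(x, rep w)\<in>R" using tr' xy yr by blast
        then have "rep w \<in> Y" using x rep_in[OF w(1)] unfolding Phi_def by blast
        then show "\<exists>z\<in>Y. (y,z)\<in>R" using yr by blast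
      qed
      then show "x \<in> Y" using mem x unfolding Phi_def by blast
    qed
  qed
qed

lemma K2a: assumes A: "A \<subseteq> Rp" shows "Phi A \<in> Reg U R"
proof -
  have "Phi A = {x\<in>U. \<forall>y. (x,y)\<in>R \<longrightarrow> (\<exists>z\<in>Phi A. (y,z)\<in>R)}"
  proof
    show "Phi A \<subseteq> {x\<in>U. \<forall>y. (x,y)\<in>R \<longrightarrow> (\<exists>z\<in>Phi A. (y,z)\<in>R)}"
    proof
      fix x assume x: "x \<in> Phi A"
      have "\<forall>y. (x,y)\<in>R \<longrightarrow> (\<exists>z\<in>Phi A. (y,z)\<in>R)"
      proof (intro allI impI)
        fix y assume xy: "(x,y)\<in>R"
        obtain w where w: "termi w" "(y,w)\<in>R" using exists_termi inU xy by blast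
        define r where "r = rep w"
        have rR: "r \<in> Rp" using rep_in w r_def by blast
        have yr: "(y, r)\<in>R" using tr' w rep_props r_def by blast
        have "(x, r)\<in>R" using tr' xy yr by blast
        then have rA: "r \<in> A" using x rR unfolding Phi_def by blast
        have rt: "termi r" "rep r = r" using Rp_fix rR by auto
        have "r \<in> Phi A"
          unfolding Phi_def
        proof (intro CollectI conjI ballI impI)
          show "r \<in> U" using rt termi_def by blast
          fix t assume "t \<in> Rp" "(r,t)\<in>R"
          then have "t = rep r" using Rp_iff rt by blast
          then show "t \<in> A" using rt rA by simp
        qed
        then show "\<exists>z\<in>Phi A. (y,z)\<in>R" using yr by blast
      qed
      then show "x \<in> {x\<in>U. \<forall>y. (x,y)\<in>R \<longrightarrow> (\<exists>z\<in>Phi A. (y,z)\<in>R)}"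
        using x unfolding Phi_def by blast
    qed
  next
    show "{x\<in>U. \<forall>y. (x,y)\<in>R \<longrightarrow> (\<exists>z\<in>Phi A. (y,z)\<in>R)} \<subseteq> Phi A"
    proof
      fix x assume x: "x \<in> {x\<in>U. \<forall>y. (x,y)\<in>R \<longrightarrow> (\<exists>z\<in>Phi A. (y,z)\<in>R)}"
      have "\<forall>t\<in>Rp. (x,t) \<in> R \<longrightarrow> t \<in> A"
      proof (intro ballI impI)
        fix t assume t: "t \<in> Rp" "(x,t)\<in>R"
        then obtain z where z: "z \<in> Phi A" "(t,z)\<in>R" using x by blast
        have tt: "termi t" using Rp_fix t by blast
        have "(z,t)\<in>R" using termi_step[OF tt z(2)] by auto
        then show "t \<in> A" using z t unfolding Phi_def by blast
      qed
      then show "x \<in> Phi A" using x unfolding Phi_def by blast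
    qed
  qed
  moreover have "Phi A \<subseteq> U" unfolding Phi_def by blast
  ultimately show ?thesis using reg_char by blast
qed

lemma K2b: assumes A: "A \<subseteq> Rp" shows "Phi A \<inter> Rp = A"
proof
  show "Phi A \<inter> Rp \<subseteq> A"
    unfolding Phi_def using Rp_fix termi_refl by blast
next
  show "A \<subseteq> Phi A \<inter> Rp"
  proof
    fix t assume t: "t \<in> A"
    then have tR: "t \<in> Rp" using A by blast
    then have tt: "termi t" "rep t = t" using Rp_fix by auto
    have "t \<in> Phi A"
      unfolding Phi_def
    proof (intro CollectI conjI ballI impI)
      show "t \<in> U" using tt termi_def by blast
      fix s assume "s \<in> Rp" "(t,s)\<in>R"
      then have "s = rep t" using Rp_iff tt by blast
      then show "s \<in> A" using tt t by simp
    qed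
    then show "t \<in> Phi A \<inter> Rp" using tR by blast
  qed
qed

lemma Phi_mono: "A \<subseteq> B \<Longrightarrow> Phi A \<subseteq> Phi B" unfolding Phi_def by blast

lemma Rp_U: "Rp \<subseteq> U" using Rp_fix termi_def by blast

lemma height: assumes Y: "Y \<in> Reg U R" shows "reg_height U R Y = card (Y \<inter> Rp)"
proof -
  let ?S = "{card C - 1 | C. C \<subseteq> {Z \<in> Reg U R. Z \<subseteq> Y} \<and> is_chain C \<and> C \<noteq> {}}"
  have finA: "finite (Y \<inter> Rp)"
    by (rule finite_subset[OF _ fin]) (use Rp_U in blast)
  have Ssub: "?S \<subseteq> (\<lambda>C. card C - 1) ` Pow (Pow U)"
  proof
    fix n assume "n \<in> ?S"
    then obtain C where C: "n = card C - 1" "C \<subseteq> {Z \<in> Reg U R. Z \<subseteq> Y}" by blast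
    have "C \<in> Pow (Pow U)" using C(2) unfolding Reg_def by auto
    then show "n \<in> (\<lambda>C. card C - 1) ` Pow (Pow U)" using C(1) by (rule rev_image_eqI)
  qed
  have finS: "finite ?S"
    by (rule finite_subset[OF Ssub finite_imageI]) (simp add: fin)
  have bound: "\<And>n. n \<in> ?S \<Longrightarrow> n \<le> card (Y \<inter> Rp)"
  proof -
    fix n assume "n \<in> ?S"
    then obtain C where C: "n = card C - 1" "C \<subseteq> {Z \<in> Reg U R. Z \<subseteq> Y}" "is_chain C" by blast
    have inj: "inj_on (\<lambda>Z. Z \<inter> Rp) C"
    proof (rule inj_onI)
      fix Z1 Z2 assume z: "Z1 \<in> C" "Z2 \<in> C" "Z1 \<inter> Rp = Z2 \<inter> Rp"
      have r: "Z1 \<in> Reg U R" "Z2 \<in> Reg U R" using z(1,2) C(2) by auto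
      have e1: "Z1 = Phi (Z1 \<inter> Rp)" by (rule K1[OF r(1)])
      have e2: "Z2 = Phi (Z2 \<inter> Rp)" by (rule K1[OF r(2)])
      show "Z1 = Z2" using e1 e2 z(3) by metis
    qed
    have "(\<lambda>Z. Z \<inter> Rp) ` C \<subseteq> Pow (Y \<inter> Rp)" using C(2) by blast
    moreover have "is_chain ((\<lambda>Z. Z \<inter> Rp) ` C)"
      by (rule chain_image[OF C(3)]) blast
    ultimately have "card ((\<lambda>Z. Z \<inter> Rp) ` C) \<le> card (Y \<inter> Rp) + 1"
      by (rule chain_card_le[OF finA])
    then show "n \<le> card (Y \<inter> Rp)" using card_image[OF inj] C(1) by simp
  qed
  obtain C0 where C0: "C0 \<subseteq> Pow (Y \<inter> Rp)" "is_chain C0" "card C0 = card (Y \<inter> Rp) + 1"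
    using chain_exists[OF finA] by blast
  have inj: "inj_on Phi C0"
  proof (rule inj_onI)
    fix B1 B2 assume b: "B1 \<in> C0" "B2 \<in> C0" "Phi B1 = Phi B2"
    have "B1 \<subseteq> Rp" "B2 \<subseteq> Rp" using b(1,2) C0(1) by auto
    then have "Phi B1 \<inter> Rp = B1" "Phi B2 \<inter> Rp = B2" using K2b by auto
    then show "B1 = B2" using b(3) by metis
  qed
  have YPhi: "Y = Phi (Y \<inter> Rp)" by (rule K1[OF Y])
  have img: "Phi ` C0 \<subseteq> {Z \<in> Reg U R. Z \<subseteq> Y}"
  proof
    fix Z assume "Z \<in> Phi ` C0"
    then obtain B where B: "B \<in> C0" "Z = Phi B" by blast
    have BY: "B \<subseteq> Y \<inter> Rp" using B C0(1) by blast
    then have "Phi B \<in> Reg U R" using K2a by blast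
    moreover have "Phi B \<subseteq> Phi (Y \<inter> Rp)" using Phi_mono[OF BY] .
    ultimately have "Phi B \<in> {Z \<in> Reg U R. Z \<subseteq> Y}" using YPhi by auto
    then show "Z \<in> {Z \<in> Reg U R. Z \<subseteq> Y}" using B(2) by simp
  qed
  have ch: "is_chain (Phi ` C0)" by (rule chain_image[OF C0(2) Phi_mono])
  have ne: "Phi ` C0 \<noteq> {}" using C0(3) by auto
  have cd: "card (Y \<inter> Rp) = card (Phi ` C0) - 1" using card_image[OF inj] C0(3) by simp
  have "card (Y \<inter> Rp) \<in> ?S"
    by (rule CollectI, rule exI[of _ "Phi ` C0"]) (use img ch ne cd in simp)
  then show ?thesis unfolding reg_height_def using finS bound by (intro Max_eqI)
qed

lemma main: assumes X: "X \<in> Reg U R" shows "reg_rank U R X = reg_height U R X"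
proof -
  let ?T = "{card I | I. I \<subseteq> X \<and> reg_indep U R I}"
  have XU: "X \<subseteq> U" using X unfolding Reg_def by blast
  have Tsub: "?T \<subseteq> card ` Pow X" by blast
  have finT: "finite ?T"
    by (rule finite_subset[OF Tsub finite_imageI]) (simp add: finite_subset[OF XU fin])
  have bound: "\<And>n. n \<in> ?T \<Longrightarrow> n \<le> reg_height U R X"
  proof -
    fix n assume "n \<in> ?T"
    then obtain I where I: "n = card I" "I \<subseteq> X" "reg_indep U R I" by blast
    then have "card (I \<inter> X) \<le> reg_height U R X" using X unfolding reg_indep_def by blast
    moreover have "I \<inter> X = I" using I by blast
    ultimately show "n \<le> reg_height U R X" using I by simp
  qed
  have "reg_indep U R (X \<inter> Rp)"
    unfolding reg_indep_def
  proof (intro conjI ballI)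
    show "X \<inter> Rp \<subseteq> U" using XU by blast
    fix Y assume Y: "Y \<in> Reg U R"
    have fY: "finite (Y \<inter> Rp)"
      by (rule finite_subset[OF _ fin]) (use Rp_U in blast)
    have "card (X \<inter> Rp \<inter> Y) \<le> card (Y \<inter> Rp)" by (rule card_mono[OF fY]) blast
    then show "card (X \<inter> Rp \<inter> Y) \<le> reg_height U R Y" using height[OF Y] by simp
  qed
  then have "card (X \<inter> Rp) \<in> ?T" by blast
  then have "reg_height U R X \<in> ?T" using height[OF X] by simp
  then have "Max ?T = reg_height U R X" using finT bound by (intro Max_eqI)
  then show ?thesis unfolding reg_rank_def .
qed

end

theorem proposition4:
  fixes U :: "'a set" and R :: "('a \<times> 'a) set"
  assumes "finite U" and "U \<noteq> {}"
    and "R \<subseteq> U \<times> U" and "serial_on U R" and "trans R"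
    and "X \<in> Reg U R"
  shows "reg_rank U R X = reg_height U R X"
proof -
  interpret rs U R using assms by unfold_locales
  show ?thesis using main assms(6) .
qed

end
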